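(* For all integers $n,k,s,b$ with $n \geq k \geq s > b \geq 0$, $n > 0$ and $n \geq k+s-b$, there exists an $(n,k,s,b)$-oriented graph.
   Context: An oriented graph is a digraph with no loops and no pair of symmetric arcs. For vertices $u,v$ write $u(1\text{-}0)v$ if there is an arc from $u$ to $v$, and $u(0\text{-}0)v$ if there is no arc between $u$ and $v$. A vertex $v$ is weakly reachable within two steps from $u$ if $u(1\text{-}0)v$, or $u(0\text{-}0)v$, or for some vertex $w$ one has $u(1\text{-}0)w(1\text{-}0)v$, or $u(1\text{-}0)w(0\text{-}0)v$, or $u(0\text{-}0)w(1\text{-}0)v$. A vertex $u$ is a weak king if every other vertex is weakly reachable within two steps from $u$, and a weak serf if $u$ is weakly reachable within two steps from every other vertex. An $(n,k,s,b)$-oriented graph is an oriented graph on $n$ vertices with exactly $k$ weak kings and exactly $s$ weak serfs, such that exactly $b$ of the weak kings are also weak serfs. *)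

theory Defs
  imports Main
begin

text \<open>An oriented graph on the vertex set V with arc relation A (A u v: arc from u to v).
  Only arcs between vertices of V matter.\<close>
definition oriented_graph :: "'a set \<Rightarrow> ('a \<Rightarrow> 'a \<Rightarrow> bool) \<Rightarrow> bool" where
  "oriented_graph V A \<longleftrightarrow> finite V \<and> (\<forall>u\<in>V. \<not> A u u) \<and>
     (\<forall>u\<in>V. \<forall>v\<in>V. A u v \<longrightarrow> \<not> A v u)"

definition arc10 :: "('a \<Rightarrow> 'a \<Rightarrow> bool) \<Rightarrow> 'a \<Rightarrow> 'a \<Rightarrow> bool" where
  "arc10 A u v \<longleftrightarrow> A u v"

definition arc00 :: "('a \<Rightarrow> 'a \<Rightarrow> bool) \<Rightarrow> 'a \<Rightarrow> 'a \<Rightarrow> bool" where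
  "arc00 A u v \<longleftrightarrow> u \<noteq> v \<and> \<not> A u v \<and> \<not> A v u"

definition weakly_reach2 :: "'a set \<Rightarrow> ('a \<Rightarrow> 'a \<Rightarrow> bool) \<Rightarrow> 'a \<Rightarrow> 'a \<Rightarrow> bool" where
  "weakly_reach2 V A u v \<longleftrightarrow>
     arc10 A u v \<or> arc00 A u v \<or>
     (\<exists>w\<in>V. (arc10 A u w \<and> arc10 A w v) \<or> (arc10 A u w \<and> arc00 A w v)
              \<or> (arc00 A u w \<and> arc10 A w v))"

definition weak_king :: "'a set \<Rightarrow> ('a \<Rightarrow> 'a \<Rightarrow> bool) \<Rightarrow> 'a \<Rightarrow> bool" where
  "weak_king V A u \<longleftrightarrow> u \<in> V \<and> (\<forall>v\<in>V. v \<noteq> u \<longrightarrow> weakly_reach2 V A u v)"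

definition weak_serf :: "'a set \<Rightarrow> ('a \<Rightarrow> 'a \<Rightarrow> bool) \<Rightarrow> 'a \<Rightarrow> bool" where
  "weak_serf V A u \<longleftrightarrow> u \<in> V \<and> (\<forall>v\<in>V. v \<noteq> u \<longrightarrow> weakly_reach2 V A v u)"

definition nksb_oriented_graph ::
  "'a set \<Rightarrow> ('a \<Rightarrow> 'a \<Rightarrow> bool) \<Rightarrow> nat \<Rightarrow> nat \<Rightarrow> nat \<Rightarrow> nat \<Rightarrow> bool" where
  "nksb_oriented_graph V A n k s b \<longleftrightarrow> oriented_graph V A \<and> card V = n \<and>
     card {u\<in>V. weak_king V A u} = k \<and> card {u\<in>V. weak_serf V A u} = s \<and>
     card {u\<in>V. weak_king V A u \<and> weak_serf V A u} = b"

end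

theory Submission
  imports Defs
begin

definition lev :: "nat \<Rightarrow> nat \<Rightarrow> nat \<Rightarrow> nat" where
  "lev a c u = (if u < a then 0 else if u < c then 1 else 2)"

definition G :: "nat \<Rightarrow> nat \<Rightarrow> nat \<Rightarrow> nat \<Rightarrow> nat \<Rightarrow> bool" where
  "G a c d u v \<longleftrightarrow> u < d \<and> v < d \<and> lev a c u < lev a c v"

lemma king_iff:
  assumes "0 < a" "a \<le> c" "c < d" "d \<le> n" "u < n"
  shows "weak_king {0..<n} (G a c d) u \<longleftrightarrow> (u < a \<or> d \<le> u)"
proof
  assume K: "weak_king {0..<n} (G a c d) u"
  show "u < a \<or> d \<le> u"
  proof (rule ccontr)
    assume "\<not> (u < a \<or> d \<le> u)"
    hence u: "a \<le> u" "u < d" by auto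
    have "weakly_reach2 {0..<n} (G a c d) u 0" using K u assms unfolding weak_king_def by auto
    thus False using u assms
      unfolding weakly_reach2_def arc10_def arc00_def G_def lev_def by (auto split: if_splits)
  qed
next
  assume "u < a \<or> d \<le> u"
  thus "weak_king {0..<n} (G a c d) u"
    using assms unfolding weak_king_def weakly_reach2_def arc10_def arc00_def G_def lev_def
    by auto
qed

lemma serf_iff:
  assumes "0 < a" "a \<le> c" "c < d" "d \<le> n" "u < n"
  shows "weak_serf {0..<n} (G a c d) u \<longleftrightarrow> c \<le> u"
proof
  assume K: "weak_serf {0..<n} (G a c d) u"
  show "c \<le> u"
  proof (rule ccontr)
    assume "\<not> c \<le> u"
    hence u: "u < c" by auto
    have "weakly_reach2 {0..<n} (G a c d) c u" using K u assms unfolding weak_serf_def by auto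
    thus False using u assms
      unfolding weakly_reach2_def arc10_def arc00_def G_def lev_def by (auto split: if_splits)
  qed
next
  assume "c \<le> u"
  thus "weak_serf {0..<n} (G a c d) u"
    using assms unfolding weak_serf_def weakly_reach2_def arc10_def arc00_def G_def lev_def
    by auto
qed

theorem theorem9:
  fixes n k s b :: nat
  assumes "n \<ge> k" and "k \<ge> s" and "s > b" and "n > 0" and "n \<ge> k + s - b"
  shows "\<exists>A :: nat \<Rightarrow> nat \<Rightarrow> bool. nksb_oriented_graph {0..<n} A n k s b"
proof -
  define a where "a = k - b"
  define c where "c = n - s"
  define d where "d = n - b"
  have h: "0 < a" "a \<le> c" "c < d" "d \<le> n" using assms unfolding a_def c_def d_def by auto
  have og: "oriented_graph {0..<n} (G a c d)"
    unfolding oriented_graph_def G_def by auto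
  have e1: "{u\<in>{0..<n}. weak_king {0..<n} (G a c d) u} = {0..<a} \<union> {d..<n}"
    using king_iff[OF h] h by auto
  have e2: "{u\<in>{0..<n}. weak_serf {0..<n} (G a c d) u} = {c..<n}"
    using serf_iff[OF h] h by auto
  have e3: "{u\<in>{0..<n}. weak_king {0..<n} (G a c d) u \<and> weak_serf {0..<n} (G a c d) u} = {d..<n}"
    using king_iff[OF h] serf_iff[OF h] h by auto
  have c1: "card ({0..<a} \<union> {d..<n}) = k"
    using h assms by (subst card_Un_disjoint) (auto simp: a_def d_def)
  show ?thesis
    apply (rule exI[of _ "G a c d"])
    unfolding nksb_oriented_graph_def using og e1 e2 e3 c1 assms
    by (auto simp: c_def d_def)
qed

end
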